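(* Let $d\ge1$ and $n>2$ be integers. Then $\mathcal U(H(d,n))$ is the groupoid with one object $\ast$ and only the identity morphism $\mathrm{id}_\ast$, and $\varpi(H(d,n))$ is the trivial morphism-colored functor (sending every object to $\ast$, every morphism to $\mathrm{id}_\ast$, every color $a\in\{0,\dots,d\}$ to $\mathrm{id}_\ast$). Consequently, for every category $\mathcal C$, every morphism-colored functor from $H(d,n)$ to the discrete morphism-colored category $(\mathcal C,\mathrm{id})$ factors (uniquely) through this trivial morphism-colored functor; and for all integers $d,d'\ge1$ and $n,n'>2$ there is a one-to-one correspondence between morphism-colored functors $H(d,n)\to(\mathcal C,\mathrm{id})$ and morphism-colored functors $H(d',n')\to(\mathcal C,\mathrm{id})$.
   Context: A morphism-colored category is a pair $(\mathcal C,\lambda)$ where $\mathcal C$ is a category and $\lambda$ assigns to each morphism $f$ a color $\lambda(f)$, such that whenever $\lambda(g)=\lambda(f_1\circ f_2)$ there exist composable $g_1,g_2$ with $g=g_1\circ g_2$, $\lambda(g_i)=\lambda(f_i)$. $(\mathcal C,\mathrm{id})$ (each morphism colored by itself) is the discrete morphism-colored category. A morphism-colored functor $(F,\gamma):(\mathcal C,\lambda)\to(\mathcal C',\lambda')$ is a functor $F$ with a map $\gamma$ on colors such that $\gamma(\lambda(f))=\lambda'(F(f))$ for all morphisms $f$; composition is componentwise. For a small morphism-colored groupoid $(\mathcal G,\lambda)$ with $\lambda(f)=\lambda(g)\Rightarrow\lambda(f^{-1})=\lambda(g^{-1})$: $I_1=\lambda(\mathrm{Mor}\,\mathcal G)$,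 $\lambda_1$ the corestriction; $I_0=\{\lambda(\mathrm{id}_x)\}$, $\lambda_0(x)=\lambda(\mathrm{id}_x)$; $\overset{1}{\sim}$ on $I_1$ relates $\lambda(f_1\circ\cdots\circ f_l)$ and $\lambda(g_1\circ\cdots\circ g_l)$ for composable sequences with $\lambda(f_i)=\lambda(g_i)$ for all $i$ (an equivalence relation), with quotient $s_1:I_1\to\bar I_1$; $\overset{0}{\sim}$ on $I_0$ relates $\lambda_0(\mathrm{source} f)$, $\lambda_0(\mathrm{source} g)$ whenever $s_1\lambda_1(f)=s_1\lambda_1(g)$, with quotient $s_0:I_0\to\bar I_0$. $\mathcal U(\mathcal G,\lambda)$ is the groupoid with objects $\bar I_0$, morphisms $\bar I_1$, source/target of $s_1\lambda_1(f)$ being $s_0\lambda_0$ of source/target of $f$, composition $s_1\lambda_1(f)\circ s_1\lambda_1(g)=s_1\lambda_1(f\circ g)$; $\bar\lambda:\mathcal G\to\mathcal U(\mathcal G,\lambda)$ is $x\mapsto s_0\lambda_0(x)$, $f\mapsto s_1\lambda_1(f)$, and $\varpi(\mathcal G,\lambda)=(\bar\lambda,s_1)$. Hamming schemoid: let $G=(\mathbb Z/n\mathbb Z)^d$ and $w(x)=\#\{i:x_i\neq0\}$ the Hamming weight. $G/\!/G$ is the action groupoid: objects $G$, morphisms $G\times G$, where $(g,x)$ has source $x$ and target $g+x$, composition $(h,g+x)\circ(g,x)=(h+g,x)$, identity $\mathrm{id}_x=(0,x)$, inverse $(g,x)^{-1}=(-g,g+x)$. Let $\pi(g,x)=g$.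 Then $H(d,n)=(G/\!/G,\,w\circ\pi)$, a morphism-colored groupoid with colors in $\{0,\dots,d\}$ satisfying $w\circ\pi(f)=w\circ\pi(g)\Rightarrow w\circ\pi(f^{-1})=w\circ\pi(g^{-1})$. *)

theory Defs
  imports "HOL-Library.FuncSet"
begin

record ('o,'m) category =
  Ob  :: "'o set"
  Ar  :: "'m set"
  src :: "'m \<Rightarrow> 'o"
  tgt :: "'m \<Rightarrow> 'o"
  cmp :: "'m \<Rightarrow> 'm \<Rightarrow> 'm"   (* cmp C g f = g \<circ> f, defined when src g = tgt f *)
  ide :: "'o \<Rightarrow> 'm"

definition is_category :: "('o,'m) category \<Rightarrow> bool" where
  "is_category C \<longleftrightarrow>
     (\<forall>f\<in>Ar C. src C f \<in> Ob C \<and> tgt C f \<in> Ob C) \<and>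
     (\<forall>x\<in>Ob C. ide C x \<in> Ar C \<and> src C (ide C x) = x \<and> tgt C (ide C x) = x) \<and>
     (\<forall>f\<in>Ar C. \<forall>g\<in>Ar C. src C g = tgt C f \<longrightarrow>
        cmp C g f \<in> Ar C \<and> src C (cmp C g f) = src C f \<and> tgt C (cmp C g f) = tgt C g) \<and>
     (\<forall>f\<in>Ar C. \<forall>g\<in>Ar C. \<forall>h\<in>Ar C. src C g = tgt C f \<longrightarrow> src C h = tgt C g \<longrightarrow>
        cmp C h (cmp C g f) = cmp C (cmp C h g) f) \<and>
     (\<forall>f\<in>Ar C. cmp C (ide C (tgt C f)) f = f \<and> cmp C f (ide C (src C f)) = f)"

definition is_functor ::
  "('o1,'m1) category \<Rightarrow> ('o2,'m2) category \<Rightarrow> ('o1 \<Rightarrow> 'o2) \<Rightarrow> ('m1 \<Rightarrow> 'm2) \<Rightarrow> bool" where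
  "is_functor C D Fo Fm \<longleftrightarrow>
     (\<forall>x\<in>Ob C. Fo x \<in> Ob D) \<and> (\<forall>f\<in>Ar C. Fm f \<in> Ar D) \<and>
     (\<forall>f\<in>Ar C. src D (Fm f) = Fo (src C f) \<and> tgt D (Fm f) = Fo (tgt C f)) \<and>
     (\<forall>x\<in>Ob C. Fm (ide C x) = ide D (Fo x)) \<and>
     (\<forall>f\<in>Ar C. \<forall>g\<in>Ar C. src C g = tgt C f \<longrightarrow> Fm (cmp C g f) = cmp D (Fm g) (Fm f))"

text \<open>Morphism-colored functors (F, gamma) from (C, lam) to (D, mu), as (object map, morphism map,
  color map) triples, taken extensional (undefined outside the carriers / color set) so that
  sets of them and uniqueness statements are meaningful.\<close>

definition mc_functors ::
  "('o1,'m1) category \<Rightarrow> ('m1 \<Rightarrow> 'c1) \<Rightarrow> ('o2,'m2) category \<Rightarrow> ('m2 \<Rightarrow> 'c2)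
     \<Rightarrow> (('o1 \<Rightarrow> 'o2) \<times> ('m1 \<Rightarrow> 'm2) \<times> ('c1 \<Rightarrow> 'c2)) set" where
  "mc_functors C lam D mu = {(Fo, Fm, \<gamma>).
     is_functor C D Fo Fm \<and> (\<forall>f\<in>Ar C. \<gamma> (lam f) = mu (Fm f)) \<and>
     Fo \<in> extensional (Ob C) \<and> Fm \<in> extensional (Ar C) \<and> \<gamma> \<in> extensional (lam ` Ar C)}"

fun comp_list :: "('o,'m) category \<Rightarrow> 'm list \<Rightarrow> 'm" where
  "comp_list C [] = undefined"
| "comp_list C [f] = f"
| "comp_list C (f # g # fs) = cmp C f (comp_list C (g # fs))"

definition composable :: "('o,'m) category \<Rightarrow> 'm list \<Rightarrow> bool" where
  "composable C fs \<longleftrightarrow> fs \<noteq> [] \<and> set fs \<subseteq> Ar C \<and>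
     (\<forall>i. Suc i < length fs \<longrightarrow> src C (fs ! i) = tgt C (fs ! Suc i))"

definition I1 :: "('o,'m) category \<Rightarrow> ('m \<Rightarrow> 'c) \<Rightarrow> 'c set" where
  "I1 C lam = lam ` Ar C"

definition lam0 :: "('o,'m) category \<Rightarrow> ('m \<Rightarrow> 'c) \<Rightarrow> 'o \<Rightarrow> 'c" where
  "lam0 C lam x = lam (ide C x)"

definition I0 :: "('o,'m) category \<Rightarrow> ('m \<Rightarrow> 'c) \<Rightarrow> 'c set" where
  "I0 C lam = lam0 C lam ` Ob C"

definition rel1 :: "('o,'m) category \<Rightarrow> ('m \<Rightarrow> 'c) \<Rightarrow> ('c \<times> 'c) set" where
  "rel1 C lam = {(a, b). \<exists>fs gs. composable C fs \<and> composable C gs \<and>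
      map lam fs = map lam gs \<and> a = lam (comp_list C fs) \<and> b = lam (comp_list C gs)}"

definition s1 :: "('o,'m) category \<Rightarrow> ('m \<Rightarrow> 'c) \<Rightarrow> 'c \<Rightarrow> 'c set" where
  "s1 C lam a = rel1 C lam `` {a}"

definition rel0_gen :: "('o,'m) category \<Rightarrow> ('m \<Rightarrow> 'c) \<Rightarrow> ('c \<times> 'c) set" where
  "rel0_gen C lam = {(lam0 C lam (src C f), lam0 C lam (src C g)) | f g.
      f \<in> Ar C \<and> g \<in> Ar C \<and> s1 C lam (lam f) = s1 C lam (lam g)}"

definition rel0 :: "('o,'m) category \<Rightarrow> ('m \<Rightarrow> 'c) \<Rightarrow> ('c \<times> 'c) set" where
  "rel0 C lam = Id_on (I0 C lam) \<union> (rel0_gen C lam \<union> (rel0_gen C lam)\<inverse>)\<^sup>+"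

definition s0 :: "('o,'m) category \<Rightarrow> ('m \<Rightarrow> 'c) \<Rightarrow> 'c \<Rightarrow> 'c set" where
  "s0 C lam c = rel0 C lam `` {c}"

definition lambar_ob :: "('o,'m) category \<Rightarrow> ('m \<Rightarrow> 'c) \<Rightarrow> 'o \<Rightarrow> 'c set" where
  "lambar_ob C lam x = s0 C lam (lam0 C lam x)"

definition lambar_ar :: "('o,'m) category \<Rightarrow> ('m \<Rightarrow> 'c) \<Rightarrow> 'm \<Rightarrow> 'c set" where
  "lambar_ar C lam f = s1 C lam (lam f)"

definition Ucat :: "('o,'m) category \<Rightarrow> ('m \<Rightarrow> 'c) \<Rightarrow> ('c set, 'c set) category" where
  "Ucat C lam = \<lparr>
     Ob = s0 C lam ` I0 C lam,
     Ar = s1 C lam ` I1 C lam,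
     src = (\<lambda>m. lambar_ob C lam (src C (SOME f. f \<in> Ar C \<and> lambar_ar C lam f = m))),
     tgt = (\<lambda>m. lambar_ob C lam (tgt C (SOME f. f \<in> Ar C \<and> lambar_ar C lam f = m))),
     cmp = (\<lambda>m m'. lambar_ar C lam (case (SOME p. fst p \<in> Ar C \<and> snd p \<in> Ar C \<and>
                src C (fst p) = tgt C (snd p) \<and> lambar_ar C lam (fst p) = m \<and>
                lambar_ar C lam (snd p) = m') of (f, g) \<Rightarrow> cmp C f g)),
     ide = (\<lambda>u. lambar_ar C lam (ide C (SOME x. x \<in> Ob C \<and> lambar_ob C lam x = u))) \<rparr>"

text \<open>G = (Z/nZ)^d, elements represented as functions nat => int with values in {0..<n}
  on indices < d and 0 elsewhere.\<close>

definition Gset :: "nat \<Rightarrow> int \<Rightarrow> (nat \<Rightarrow> int) set" where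
  "Gset d n = {x. (\<forall>i<d. 0 \<le> x i \<and> x i < n) \<and> (\<forall>i\<ge>d. x i = 0)}"

definition vadd :: "int \<Rightarrow> (nat \<Rightarrow> int) \<Rightarrow> (nat \<Rightarrow> int) \<Rightarrow> (nat \<Rightarrow> int)" where
  "vadd n g x = (\<lambda>i. (g i + x i) mod n)"

definition hweight :: "nat \<Rightarrow> (nat \<Rightarrow> int) \<Rightarrow> nat" where
  "hweight d x = card {i. i < d \<and> x i \<noteq> 0}"

definition Hcat :: "nat \<Rightarrow> int \<Rightarrow> (nat \<Rightarrow> int, (nat \<Rightarrow> int) \<times> (nat \<Rightarrow> int)) category" where
  "Hcat d n = \<lparr>
     Ob = Gset d n,
     Ar = Gset d n \<times> Gset d n,
     src = (\<lambda>(g, x). x),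
     tgt = (\<lambda>(g, x). vadd n g x),
     cmp = (\<lambda>(h, y) (g, x). (vadd n h g, x)),
     ide = (\<lambda>x. ((\<lambda>i. 0), x)) \<rparr>"

definition Hcol :: "nat \<Rightarrow> (nat \<Rightarrow> int) \<times> (nat \<Rightarrow> int) \<Rightarrow> nat" where
  "Hcol d f = hweight d (fst f)"

end

theory Submission
  imports Defs
begin

definition onev :: "nat \<Rightarrow> nat \<Rightarrow> int" where "onev d = (\<lambda>i. if i<d then 1 else 0)"
definition va :: "nat \<Rightarrow> int \<Rightarrow> nat \<Rightarrow> nat \<Rightarrow> int" where
  "va d n a = (\<lambda>i. if i<d then (if i<a then n-1 else 1) else 0)"
definition zv :: "nat \<Rightarrow> int" where "zv = (\<lambda>i. 0)"

lemma hweight_le: "hweight d x \<le> d"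
  unfolding hweight_def by (rule order_trans[OF card_mono[of "{..<d}"]]) auto

lemma Hcol_le: "Hcol d f \<le> d" by (simp add: Hcol_def hweight_le)

lemma va_G: "n > 2 \<Longrightarrow> va d n a \<in> Gset d n" by (auto simp: va_def Gset_def)
lemma one_G: "n > 2 \<Longrightarrow> onev d \<in> Gset d n" by (auto simp: onev_def Gset_def)
lemma z_G: "n > 0 \<Longrightarrow> zv \<in> Gset d n" by (auto simp: zv_def Gset_def)

lemma vadd_G: "n > 0 \<Longrightarrow> g \<in> Gset d n \<Longrightarrow> x \<in> Gset d n \<Longrightarrow> vadd n g x \<in> Gset d n"
  by (auto simp: vadd_def Gset_def)

lemma hw_va: "n > 2 \<Longrightarrow> hweight d (va d n a) = d"
proof -
  assume "n > 2"
  then have "{i. i<d \<and> va d n a i \<noteq> 0} = {..<d}" by (auto simp: va_def)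
  then show ?thesis by (simp add: hweight_def)
qed

lemma hw_one: "hweight d (onev d) = d"
proof -
  have "{i. i<d \<and> onev d i \<noteq> 0} = {..<d}" by (auto simp: onev_def)
  then show ?thesis by (simp add: hweight_def)
qed

lemma vadd_one_va: "n > 2 \<Longrightarrow> vadd n (onev d) (va d n a) = (\<lambda>i. if i<d \<and> \<not> i<a then 2 else 0)"
  by (auto simp: vadd_def onev_def va_def)

lemma hw_vadd: "n > 2 \<Longrightarrow> hweight d (vadd n (onev d) (va d n a)) = d - a"
proof -
  assume n: "n > 2"
  have "{i. i<d \<and> (\<lambda>i. if i<d \<and> \<not> i<a then 2 else (0::int)) i \<noteq> 0} = {a..<d}" by auto
  then show ?thesis using n by (simp add: vadd_one_va hweight_def)
qed

lemma vadd_va_z: "n > 2 \<Longrightarrow> vadd n (va d n a) zv = va d n a"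
  by (auto simp: vadd_def va_def zv_def)

lemma key_pair:
  assumes "n > 2" "a \<le> d"
  shows "composable (Hcat d n) [(onev d, va d n (d-a)), (va d n (d-a), zv)]"
    and "map (Hcol d) [(onev d, va d n (d-a)), (va d n (d-a), zv)] = [d,d]"
    and "Hcol d (comp_list (Hcat d n) [(onev d, va d n (d-a)), (va d n (d-a), zv)]) = a"
proof -
  show "composable (Hcat d n) [(onev d, va d n (d-a)), (va d n (d-a), zv)]"
    unfolding composable_def using assms va_G one_G z_G vadd_va_z
    by (auto simp: Hcat_def less_Suc_eq)
  show "map (Hcol d) [(onev d, va d n (d-a)), (va d n (d-a), zv)] = [d,d]"
    using assms by (simp add: Hcol_def hw_va hw_one)
  show "Hcol d (comp_list (Hcat d n) [(onev d, va d n (d-a)), (va d n (d-a), zv)]) = a"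
    using assms by (simp add: Hcol_def Hcat_def hw_vadd)
qed

lemma rel1_eq: assumes "n > 2" shows "rel1 (Hcat d n) (Hcol d) = {0..d} \<times> {0..d}"
proof
  show "rel1 (Hcat d n) (Hcol d) \<subseteq> {0..d} \<times> {0..d}"
    unfolding rel1_def by (clarsimp simp: Hcol_def hweight_le)
  show "{0..d} \<times> {0..d} \<subseteq> rel1 (Hcat d n) (Hcol d)"
  proof clarify
    fix a b assume ab: "a \<in> {0..d}" "b \<in> {0..d}"
    then have "a \<le> d" "b \<le> d" by auto
    note A = key_pair[OF assms \<open>a \<le> d\<close>] and B = key_pair[OF assms \<open>b \<le> d\<close>]
    show "(a, b) \<in> rel1 (Hcat d n) (Hcol d)"
      unfolding rel1_def
      apply (simp only: mem_Collect_eq case_prod_conv)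
      apply (rule exI[of _ "[(onev d, va d n (d-a)), (va d n (d-a), zv)]"])
      apply (rule exI[of _ "[(onev d, va d n (d-b)), (va d n (d-b), zv)]"])
      using A B by simp
  qed
qed

lemma s1_eq: "n > 2 \<Longrightarrow> a \<le> d \<Longrightarrow> s1 (Hcat d n) (Hcol d) a = {0..d}"
  by (auto simp: s1_def rel1_eq)

lemma lam0_H: "lam0 (Hcat d n) (Hcol d) x = 0"
  by (simp add: lam0_def Hcat_def Hcol_def hweight_def)

lemma tr0: "(a,b) \<in> {(0::nat,0::nat)}\<^sup>+ \<Longrightarrow> a = 0 \<and> b = 0"
  by (induct rule: trancl_induct) auto

lemma rel0_eq: assumes "n > 0" shows "rel0 (Hcat d n) (Hcol d) = {(0,0)}"
proof -
  have g: "rel0_gen (Hcat d n) (Hcol d) \<union> (rel0_gen (Hcat d n) (Hcol d))\<inverse> \<subseteq> {(0,0)}"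
    by (auto simp: rel0_gen_def lam0_H)
  have t: "p \<in> (rel0_gen (Hcat d n) (Hcol d) \<union> (rel0_gen (Hcat d n) (Hcol d))\<inverse>)\<^sup>+ \<Longrightarrow> p = (0,0)" for p
  proof -
    assume "p \<in> (rel0_gen (Hcat d n) (Hcol d) \<union> (rel0_gen (Hcat d n) (Hcol d))\<inverse>)\<^sup>+"
    then have "p \<in> {(0::nat,0::nat)}\<^sup>+" using trancl_mono g by blast
    then show ?thesis using tr0 by (metis prod.collapse)
  qed
  have I0: "I0 (Hcat d n) (Hcol d) = {0}"
    using z_G[OF assms, of d] unfolding I0_def lam0_H by (auto simp: Hcat_def)
  show ?thesis using t I0 by (auto simp: rel0_def)
qed

lemma s0_eq: "n > 0 \<Longrightarrow> s0 (Hcat d n) (Hcol d) 0 = {0}"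
  by (auto simp: s0_def rel0_eq)

lemma Ob_H: "Ob (Hcat d n) = Gset d n" by (simp add: Hcat_def)
lemma Ar_H: "Ar (Hcat d n) = Gset d n \<times> Gset d n" by (simp add: Hcat_def)

lemma s1_Hcol: "n > 2 \<Longrightarrow> s1 (Hcat d n) (Hcol d) (Hcol d f) = {0..d}"
  by (simp add: s1_eq Hcol_le)

lemma lamob: "n > 0 \<Longrightarrow> lambar_ob (Hcat d n) (Hcol d) x = {0}"
  by (simp add: lambar_ob_def lam0_H s0_eq)

lemma lamar: "n > 2 \<Longrightarrow> lambar_ar (Hcat d n) (Hcol d) f = {0..d}"
  by (simp add: lambar_ar_def s1_eq Hcol_le)

lemma Hcol_img: assumes "n > 2" shows "Hcol d ` Ar (Hcat d n) = {0..d}"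
proof
  show "Hcol d ` Ar (Hcat d n) \<subseteq> {0..d}" using Hcol_le by auto
  show "{0..d} \<subseteq> Hcol d ` Ar (Hcat d n)"
  proof
    fix a assume "a \<in> {0..d}"
    then have a: "a \<le> d" by auto
    have "(vadd n (onev d) (va d n (d-a)), zv) \<in> Ar (Hcat d n)"
      using assms by (simp add: Hcat_def vadd_G one_G va_G z_G)
    moreover have "Hcol d (vadd n (onev d) (va d n (d-a)), zv) = a"
      using assms a by (simp add: Hcol_def hw_vadd)
    ultimately show "a \<in> Hcol d ` Ar (Hcat d n)" by force
  qed
qed

lemma Ob_U: "n > 2 \<Longrightarrow> Ob (Ucat (Hcat d n) (Hcol d)) = {{0}}"
proof -
  assume n: "n > 2"
  have "I0 (Hcat d n) (Hcol d) = {0}"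
    using z_G[of n d] n unfolding I0_def lam0_H by (auto simp: Hcat_def)
  then show ?thesis using n by (simp add: Ucat_def s0_eq)
qed

lemma Ar_U: "n > 2 \<Longrightarrow> Ar (Ucat (Hcat d n) (Hcol d)) = {{0..d}}"
proof -
  assume n: "n > 2"
  have "I1 (Hcat d n) (Hcol d) = {0..d}" using Hcol_img[OF n] by (simp add: I1_def)
  moreover have "s1 (Hcat d n) (Hcol d) ` {0..d} = {{0..d}}"
    using n s1_eq[OF n] by auto
  ultimately show ?thesis by (simp add: Ucat_def)
qed

lemma U_ops: assumes "n > 2"
  shows "src (Ucat (Hcat d n) (Hcol d)) m = {0}" "tgt (Ucat (Hcat d n) (Hcol d)) m = {0}"
    "ide (Ucat (Hcat d n) (Hcol d)) u = {0..d}" "cmp (Ucat (Hcat d n) (Hcol d)) m m' = {0..d}"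
  using assms by (simp_all add: Ucat_def lamob lamar)

definition triple where
  "triple d n C ob = (restrict (\<lambda>_. ob) (Gset d n), restrict (\<lambda>_. ide C ob) (Gset d n \<times> Gset d n),
     restrict (\<lambda>_. ide C ob) {0..d})"

lemma cat_ide: assumes "is_category C" "ob \<in> Ob C"
  shows "ide C ob \<in> Ar C" "src C (ide C ob) = ob" "tgt C (ide C ob) = ob"
    "cmp C (ide C ob) (ide C ob) = ide C ob"
  using assms unfolding is_category_def by metis+

lemma triple_in: assumes C: "is_category C" and ob: "ob \<in> Ob C" and n: "n > 2"
  shows "triple d n C ob \<in> mc_functors (Hcat d n) (Hcol d) C id"
proof -
  note ci = cat_ide[OF C ob]
  have n0: "n > 0" using n by simp
  have "is_functor (Hcat d n) C (restrict (\<lambda>_. ob) (Gset d n)) (restrict (\<lambda>_. ide C ob) (Gset d n \<times> Gset d n))"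
    unfolding is_functor_def using ob ci vadd_G[OF n0] z_G[OF n0, unfolded zv_def]
    by (auto simp: Hcat_def)
  moreover have "\<forall>f\<in>Ar (Hcat d n). restrict (\<lambda>_. ide C ob) {0..d} (Hcol d f)
      = id (restrict (\<lambda>_. ide C ob) (Gset d n \<times> Gset d n) f)"
    using Hcol_le by (auto simp: Hcat_def)
  ultimately show ?thesis
    unfolding mc_functors_def triple_def using Hcol_img[OF n] by (simp add: Hcat_def)
qed

lemma char: assumes C: "is_category C" and n: "n > 2"
  and F: "F \<in> mc_functors (Hcat d n) (Hcol d) C id"
  shows "\<exists>ob\<in>Ob C. F = triple d n C ob"
proof -
  have n0: "n > 0" using n by simp
  obtain Fo Fm \<gamma> where Fe: "F = (Fo, Fm, \<gamma>)" by (cases F) auto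
  have isf: "is_functor (Hcat d n) C Fo Fm" and col: "\<forall>f\<in>Ar (Hcat d n). \<gamma> (Hcol d f) = Fm f"
    and e1: "Fo \<in> extensional (Gset d n)" and e2: "Fm \<in> extensional (Gset d n \<times> Gset d n)"
    and e3: "\<gamma> \<in> extensional {0..d}"
    using F Hcol_img[OF n] unfolding Fe mc_functors_def by (auto simp: Hcat_def)
  define c where "c = cmp C (\<gamma> d) (\<gamma> d)"
  have ga: "\<gamma> a = c" if a: "a \<le> d" for a
  proof -
    let ?f = "(onev d, va d n (d-a))" and ?g = "(va d n (d-a), zv)"
    have fA: "?f \<in> Ar (Hcat d n)" and gA: "?g \<in> Ar (Hcat d n)"
      using n by (simp_all add: Hcat_def one_G va_G z_G)
    have sg: "src (Hcat d n) ?f = tgt (Hcat d n) ?g" using n by (simp add: Hcat_def vadd_va_z)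
    have "Fm (cmp (Hcat d n) ?f ?g) = cmp C (Fm ?f) (Fm ?g)"
      using isf fA gA sg unfolding is_functor_def by blast
    moreover have "Fm ?f = \<gamma> d" "Fm ?g = \<gamma> d"
      using col fA gA n by (auto simp: Hcol_def hw_one hw_va)
    moreover have "cmp (Hcat d n) ?f ?g \<in> Ar (Hcat d n)"
      using n by (simp add: Hcat_def vadd_G one_G va_G z_G)
    moreover have "Hcol d (cmp (Hcat d n) ?f ?g) = a"
      using n a by (simp add: Hcat_def Hcol_def hw_vadd)
    ultimately show ?thesis using col c_def by metis
  qed
  have Fmc: "Fm f = c" if "f \<in> Ar (Hcat d n)" for f
    using col that ga Hcol_le by metis
  define ob where "ob = Fo zv"
  have zO: "zv \<in> Ob (Hcat d n)" using z_G[OF n0] by (simp add: Hcat_def)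
  have oO: "ob \<in> Ob C" using isf zO unfolding is_functor_def ob_def by blast
  have "ide (Hcat d n) zv \<in> Ar (Hcat d n)" using z_G[OF n0] by (simp add: Hcat_def zv_def)
  then have cid: "c = ide C ob" using isf zO Fmc unfolding is_functor_def ob_def by metis
  have Fox: "Fo x = ob" if x: "x \<in> Gset d n" for x
  proof -
    have xO: "x \<in> Ob (Hcat d n)" using x by (simp add: Hcat_def)
    have "ide (Hcat d n) x \<in> Ar (Hcat d n)" using x z_G[OF n0] by (simp add: Hcat_def zv_def)
    then have "ide C (Fo x) = ide C ob" using isf xO Fmc cid unfolding is_functor_def by metis
    moreover have "Fo x \<in> Ob C" using isf xO unfolding is_functor_def by blast
    ultimately show ?thesis using cat_ide(2)[OF C] oO by metis
  qed
  have "Fo = restrict (\<lambda>_. ob) (Gset d n)"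
    using e1 Fox by (auto simp: extensional_def)
  moreover have "Fm = restrict (\<lambda>_. ide C ob) (Gset d n \<times> Gset d n)"
    using e2 Fmc cid by (auto simp: extensional_def Hcat_def)
  moreover have "\<gamma> = restrict (\<lambda>_. ide C ob) {0..d}"
    using e3 ga cid by (auto simp: extensional_def)
  ultimately have "F = triple d n C ob" using Fe by (simp add: triple_def)
  then show ?thesis using oO by blast
qed

lemma triple_bij: assumes C: "is_category C" and n: "n > 2"
  shows "bij_betw (triple d n C) (Ob C) (mc_functors (Hcat d n) (Hcol d) C id)"
proof (rule bij_betwI')
  have zG: "zv \<in> Gset d n" using z_G n by simp
  show "(triple d n C x = triple d n C y) = (x = y)" if "x \<in> Ob C" "y \<in> Ob C" for x y
  proof
    assume "triple d n C x = triple d n C y"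
    then have "fst (triple d n C x) zv = fst (triple d n C y) zv" by simp
    then show "x = y" using zG by (simp add: triple_def)
  qed simp
  show "triple d n C x \<in> mc_functors (Hcat d n) (Hcol d) C id" if "x \<in> Ob C" for x
    using triple_in[OF C that n] .
  show "\<exists>x\<in>Ob C. F = triple d n C x" if "F \<in> mc_functors (Hcat d n) (Hcol d) C id" for F
    using char[OF C n that] .
qed

lemma part2: assumes C: "is_category C" and n: "n > 2"
  and F: "(Fo, Fm, \<gamma>) \<in> mc_functors (Hcat d n) (Hcol d) C id"
  shows "\<exists>!K. K \<in> mc_functors (Ucat (Hcat d n) (Hcol d)) id C id \<and>
                (case K of (Ko, Km, \<delta>) \<Rightarrow>
                   (\<forall>x\<in>Ob (Hcat d n). Fo x = Ko (lambar_ob (Hcat d n) (Hcol d) x)) \<and>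
                   (\<forall>f\<in>Ar (Hcat d n). Fm f = Km (lambar_ar (Hcat d n) (Hcol d) f)) \<and>
                   (\<forall>a\<in>Hcol d ` Ar (Hcat d n). \<gamma> a = \<delta> (s1 (Hcat d n) (Hcol d) a)))"
proof -
  have n0: "n > 0" using n by simp
  obtain ob where ob: "ob \<in> Ob C" and Fe: "(Fo, Fm, \<gamma>) = triple d n C ob"
    using char[OF C n F] by blast
  then have Fo: "Fo = restrict (\<lambda>_. ob) (Gset d n)" and Fm: "Fm = restrict (\<lambda>_. ide C ob) (Gset d n \<times> Gset d n)"
    and ga: "\<gamma> = restrict (\<lambda>_. ide C ob) {0..d}" by (simp_all add: triple_def)
  note ci = cat_ide[OF C ob]
  define K where "K = (restrict (\<lambda>_. ob) {{0::nat}}, restrict (\<lambda>_. ide C ob) {{0..d}},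
      restrict (\<lambda>_. ide C ob) {{0..d}})"
  have zG: "zv \<in> Gset d n" using z_G[OF n0] .
  show ?thesis
  proof (rule ex1I[of _ K])
    have "is_functor (Ucat (Hcat d n) (Hcol d)) C (restrict (\<lambda>_. ob) {{0::nat}}) (restrict (\<lambda>_. ide C ob) {{0..d}})"
      unfolding is_functor_def using ob ci by (simp add: Ob_U[OF n] Ar_U[OF n] U_ops[OF n])
    then have "K \<in> mc_functors (Ucat (Hcat d n) (Hcol d)) id C id"
      unfolding mc_functors_def K_def by (simp add: Ob_U[OF n] Ar_U[OF n])
    moreover have "(\<forall>x\<in>Ob (Hcat d n). Fo x = restrict (\<lambda>_. ob) {{0::nat}} (lambar_ob (Hcat d n) (Hcol d) x)) \<and>
                   (\<forall>f\<in>Ar (Hcat d n). Fm f = restrict (\<lambda>_. ide C ob) {{0..d}} (lambar_ar (Hcat d n) (Hcol d) f)) \<and>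
                   (\<forall>a\<in>Hcol d ` Ar (Hcat d n). \<gamma> a = restrict (\<lambda>_. ide C ob) {{0..d}} (s1 (Hcat d n) (Hcol d) a))"
      unfolding Hcol_img[OF n]
      by (simp add: lamob[OF n0] lamar[OF n] s1_eq[OF n] Fo Fm ga Ob_H Ar_H)
    ultimately show "K \<in> mc_functors (Ucat (Hcat d n) (Hcol d)) id C id \<and>
                (case K of (Ko, Km, \<delta>) \<Rightarrow>
                   (\<forall>x\<in>Ob (Hcat d n). Fo x = Ko (lambar_ob (Hcat d n) (Hcol d) x)) \<and>
                   (\<forall>f\<in>Ar (Hcat d n). Fm f = Km (lambar_ar (Hcat d n) (Hcol d) f)) \<and>
                   (\<forall>a\<in>Hcol d ` Ar (Hcat d n). \<gamma> a = \<delta> (s1 (Hcat d n) (Hcol d) a)))"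
      by (simp add: K_def)
  next
    fix K' assume K': "K' \<in> mc_functors (Ucat (Hcat d n) (Hcol d)) id C id \<and>
                (case K' of (Ko, Km, \<delta>) \<Rightarrow>
                   (\<forall>x\<in>Ob (Hcat d n). Fo x = Ko (lambar_ob (Hcat d n) (Hcol d) x)) \<and>
                   (\<forall>f\<in>Ar (Hcat d n). Fm f = Km (lambar_ar (Hcat d n) (Hcol d) f)) \<and>
                   (\<forall>a\<in>Hcol d ` Ar (Hcat d n). \<gamma> a = \<delta> (s1 (Hcat d n) (Hcol d) a)))"
    obtain Ko Km \<delta> where Ke: "K' = (Ko, Km, \<delta>)" by (cases K') auto
    have e: "Ko \<in> extensional {{0}}" "Km \<in> extensional {{0..d}}" "\<delta> \<in> extensional {{0..d}}"
      using K' unfolding Ke mc_functors_def by (auto simp: Ob_U[OF n] Ar_U[OF n])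
    have zO: "zv \<in> Ob (Hcat d n)" "(zv, zv) \<in> Ar (Hcat d n)" using zG by (auto simp: Hcat_def)
    have h0: "(0::nat) \<in> Hcol d ` Ar (Hcat d n)" using Hcol_img[OF n] by auto
    have "Fo zv = Ko {0}" using K' zO unfolding Ke by (auto simp: lamob[OF n0])
    then have 1: "Ko {0} = ob" using Fo zG by simp
    have "Fm (zv, zv) = Km {0..d}" using K' zO unfolding Ke by (auto simp: lamar[OF n])
    then have 2: "Km {0..d} = ide C ob" using Fm zG by simp
    have "\<gamma> 0 = \<delta> {0..d}" using K' h0 unfolding Ke by (auto simp: s1_eq[OF n])
    then have 3: "\<delta> {0..d} = ide C ob" using ga by simp
    have "Ko = restrict (\<lambda>_. ob) {{0::nat}}" using e(1) 1 by (auto simp: extensional_def)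
    moreover have "Km = restrict (\<lambda>_. ide C ob) {{0..d}}" using e(2) 2 by (auto simp: extensional_def)
    moreover have "\<delta> = restrict (\<lambda>_. ide C ob) {{0..d}}" using e(3) 3 by (auto simp: extensional_def)
    ultimately show "K' = K" unfolding Ke K_def by simp
  qed
qed

theorem mainTheorem10:
  fixes d d' :: nat and n n' :: int and C :: "('o, 'm) category"
  assumes "d \<ge> 1" and "n > 2"
  shows "(\<exists>u m. Ob (Ucat (Hcat d n) (Hcol d)) = {u} \<and> Ar (Ucat (Hcat d n) (Hcol d)) = {m} \<and>
            src (Ucat (Hcat d n) (Hcol d)) m = u \<and> tgt (Ucat (Hcat d n) (Hcol d)) m = u \<and>
            ide (Ucat (Hcat d n) (Hcol d)) u = m \<and> cmp (Ucat (Hcat d n) (Hcol d)) m m = m \<and>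
            (\<forall>x\<in>Ob (Hcat d n). lambar_ob (Hcat d n) (Hcol d) x = u) \<and>
            (\<forall>f\<in>Ar (Hcat d n). lambar_ar (Hcat d n) (Hcol d) f = m) \<and>
            (\<forall>a\<in>{0..d}. s1 (Hcat d n) (Hcol d) a = m))
       \<and> (is_category C \<longrightarrow>
           (\<forall>(Fo, Fm, \<gamma>) \<in> mc_functors (Hcat d n) (Hcol d) C id.
              \<exists>!K. K \<in> mc_functors (Ucat (Hcat d n) (Hcol d)) id C id \<and>
                (case K of (Ko, Km, \<delta>) \<Rightarrow>
                   (\<forall>x\<in>Ob (Hcat d n). Fo x = Ko (lambar_ob (Hcat d n) (Hcol d) x)) \<and>
                   (\<forall>f\<in>Ar (Hcat d n). Fm f = Km (lambar_ar (Hcat d n) (Hcol d) f)) \<and>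
                   (\<forall>a\<in>Hcol d ` Ar (Hcat d n). \<gamma> a = \<delta> (s1 (Hcat d n) (Hcol d) a)))))
       \<and> (is_category C \<longrightarrow> d' \<ge> 1 \<longrightarrow> n' > 2 \<longrightarrow>
           (\<exists>\<phi>. bij_betw \<phi> (mc_functors (Hcat d n) (Hcol d) C id)
                            (mc_functors (Hcat d' n') (Hcol d') C id)))"
proof (intro conjI)
  have n: "n > 2" using assms by simp
  show "\<exists>u m. Ob (Ucat (Hcat d n) (Hcol d)) = {u} \<and> Ar (Ucat (Hcat d n) (Hcol d)) = {m} \<and>
            src (Ucat (Hcat d n) (Hcol d)) m = u \<and> tgt (Ucat (Hcat d n) (Hcol d)) m = u \<and>
            ide (Ucat (Hcat d n) (Hcol d)) u = m \<and> cmp (Ucat (Hcat d n) (Hcol d)) m m = m \<and>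
            (\<forall>x\<in>Ob (Hcat d n). lambar_ob (Hcat d n) (Hcol d) x = u) \<and>
            (\<forall>f\<in>Ar (Hcat d n). lambar_ar (Hcat d n) (Hcol d) f = m) \<and>
            (\<forall>a\<in>{0..d}. s1 (Hcat d n) (Hcol d) a = m)"
    apply (rule exI[of _ "{0}"], rule exI[of _ "{0..d}"])
    using n by (simp add: Ob_U Ar_U U_ops lamob lamar s1_eq)
  show "is_category C \<longrightarrow>
           (\<forall>(Fo, Fm, \<gamma>) \<in> mc_functors (Hcat d n) (Hcol d) C id.
              \<exists>!K. K \<in> mc_functors (Ucat (Hcat d n) (Hcol d)) id C id \<and>
                (case K of (Ko, Km, \<delta>) \<Rightarrow>
                   (\<forall>x\<in>Ob (Hcat d n). Fo x = Ko (lambar_ob (Hcat d n) (Hcol d) x)) \<and>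
                   (\<forall>f\<in>Ar (Hcat d n). Fm f = Km (lambar_ar (Hcat d n) (Hcol d) f)) \<and>
                   (\<forall>a\<in>Hcol d ` Ar (Hcat d n). \<gamma> a = \<delta> (s1 (Hcat d n) (Hcol d) a))))"
  proof (intro impI ballI)
    assume C: "is_category C"
    fix F assume F: "F \<in> mc_functors (Hcat d n) (Hcol d) C id"
    obtain Fo Fm \<gamma> where Fe: "F = (Fo, Fm, \<gamma>)" by (cases F) auto
    show "case F of (Fo, Fm, \<gamma>) \<Rightarrow>
              \<exists>!K. K \<in> mc_functors (Ucat (Hcat d n) (Hcol d)) id C id \<and>
                (case K of (Ko, Km, \<delta>) \<Rightarrow>
                   (\<forall>x\<in>Ob (Hcat d n). Fo x = Ko (lambar_ob (Hcat d n) (Hcol d) x)) \<and>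
                   (\<forall>f\<in>Ar (Hcat d n). Fm f = Km (lambar_ar (Hcat d n) (Hcol d) f)) \<and>
                   (\<forall>a\<in>Hcol d ` Ar (Hcat d n). \<gamma> a = \<delta> (s1 (Hcat d n) (Hcol d) a)))"
      unfolding Fe case_prod_conv using part2[OF C n F[unfolded Fe]] .
  qed
  show "is_category C \<longrightarrow> d' \<ge> 1 \<longrightarrow> n' > 2 \<longrightarrow>
           (\<exists>\<phi>. bij_betw \<phi> (mc_functors (Hcat d n) (Hcol d) C id)
                            (mc_functors (Hcat d' n') (Hcol d') C id))"
  proof (intro impI)
    assume C: "is_category C" and "n' > 2"
    have "bij_betw (triple d' n' C \<circ> inv_into (Ob C) (triple d n C)) (mc_functors (Hcat d n) (Hcol d) C id)
                            (mc_functors (Hcat d' n') (Hcol d') C id)"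
      using bij_betw_trans[OF bij_betw_inv_into[OF triple_bij[OF C n]] triple_bij[OF C \<open>n' > 2\<close>]] .
    then show "\<exists>\<phi>. bij_betw \<phi> (mc_functors (Hcat d n) (Hcol d) C id)
                            (mc_functors (Hcat d' n') (Hcol d') C id)" by blast
  qed
qed

end
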